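(* Let $p$ be an odd prime and let $R$ be a local nearring whose additive group $R^+$ is isomorphic to the non-abelian group of order $p^3$ and exponent $p$. Then the commutator subgroup $D(R^+)$ of $R^+$ is an ideal of $R$.
   Context: A (left) nearring is a set $R$ with operations $+,\cdot$ such that $(R,+)$ is a group, $(R,\cdot)$ a semigroup, and $x(y+z)=xy+xz$ for all $x,y,z$. A nearring with identity is local if its non-invertible elements form a subgroup of $(R,+)$. An ideal of $R$ is a normal subgroup $I$ of $(R,+)$ such that $xI\subseteq I$ for all $x\in R$ and $(z+x)y-xy\in I$ for all $x,y\in R$, $z\in I$. For the group in question, $D(R^+)$ coincides with the center of $R^+$ and has order $p$. *)

theory Defs
  imports "HOL-Algebra.Algebra"
begin

text \<open>A (left) nearring with identity, represented by a ring record R: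
  carrier R, addition add R (not assumed commutative), multiplication mult R,
  zero R and one R.  (R,+) is a group, (R,*) a monoid (semigroup with identity),
  and left distributivity x(y+z) = xy + xz holds.\<close>
definition nearring_with_one :: "('a, 'm) ring_scheme \<Rightarrow> bool" where
  "nearring_with_one R \<longleftrightarrow>
     group (add_monoid R) \<and> monoid R \<and>
     (\<forall>x\<in>carrier R. \<forall>y\<in>carrier R. \<forall>z\<in>carrier R.
        x \<otimes>\<^bsub>R\<^esub> (y \<oplus>\<^bsub>R\<^esub> z) = (x \<otimes>\<^bsub>R\<^esub> y) \<oplus>\<^bsub>R\<^esub> (x \<otimes>\<^bsub>R\<^esub> z))"

definition local_nearring :: "('a, 'm) ring_scheme \<Rightarrow> bool" where
  "local_nearring R \<longleftrightarrow> nearring_with_one R \<and>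
     subgroup (carrier R - Units R) (add_monoid R)"

definition nr_ideal :: "'a set \<Rightarrow> ('a, 'm) ring_scheme \<Rightarrow> bool" where
  "nr_ideal I R \<longleftrightarrow> normal I (add_monoid R) \<and>
     (\<forall>x\<in>carrier R. \<forall>z\<in>I. x \<otimes>\<^bsub>R\<^esub> z \<in> I) \<and>
     (\<forall>x\<in>carrier R. \<forall>y\<in>carrier R. \<forall>z\<in>I.
        ((z \<oplus>\<^bsub>R\<^esub> x) \<otimes>\<^bsub>R\<^esub> y) \<oplus>\<^bsub>R\<^esub> (\<ominus>\<^bsub>R\<^esub> (x \<otimes>\<^bsub>R\<^esub> y)) \<in> I)"

end

theory Submission
  imports Defs "HOL-Number_Theory.Residues"
begin

definition centre :: "('a,'b) monoid_scheme \<Rightarrow> 'a set" where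
  "centre G = {z \<in> carrier G. \<forall>g\<in>carrier G. g \<otimes>\<^bsub>G\<^esub> z = z \<otimes>\<^bsub>G\<^esub> g}"

lemma (in group) centre_subgroup: "subgroup (centre G) G"
proof
  show "centre G \<subseteq> carrier G" by (auto simp: centre_def)
  show "\<one> \<in> centre G" by (auto simp: centre_def)
  fix x y assume x: "x \<in> centre G" and y: "y \<in> centre G"
  have xc: "x \<in> carrier G" and yc: "y \<in> carrier G" using x y by (auto simp: centre_def)
  have "g \<otimes> (x \<otimes> y) = (x \<otimes> y) \<otimes> g" if g: "g \<in> carrier G" for g
  proof -
    have "g \<otimes> (x \<otimes> y) = (g \<otimes> x) \<otimes> y" using g xc yc by (simp add: m_assoc)
    also have "\<dots> = (x \<otimes> g) \<otimes> y" using x g by (simp add: centre_def)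
    also have "\<dots> = x \<otimes> (g \<otimes> y)" using g xc yc by (simp add: m_assoc)
    also have "\<dots> = x \<otimes> (y \<otimes> g)" using y g by (simp add: centre_def)
    also have "\<dots> = (x \<otimes> y) \<otimes> g" using g xc yc by (simp add: m_assoc)
    finally show ?thesis .
  qed
  thus "x \<otimes> y \<in> centre G" using xc yc by (simp add: centre_def)
  have "g \<otimes> inv x = inv x \<otimes> g" if g: "g \<in> carrier G" for g
  proof -
    have e: "x \<otimes> g = g \<otimes> x" using x g by (simp add: centre_def)
    have "g \<otimes> inv x = inv x \<otimes> (x \<otimes> g) \<otimes> inv x" using g xc by (simp add: m_assoc[symmetric])
    also have "\<dots> = inv x \<otimes> (g \<otimes> x) \<otimes> inv x" by (simp add: e)
    also have "\<dots> = inv x \<otimes> g" using g xc by (simp add: m_assoc)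
    finally show ?thesis .
  qed
  thus "inv x \<in> centre G" using xc by (simp add: centre_def)
qed

lemma (in group) inv_cancel_left2 [simp]:
  "x \<in> carrier G \<Longrightarrow> y \<in> carrier G \<Longrightarrow> inv x \<otimes> (x \<otimes> y) = y"
  by (simp add: m_assoc[symmetric])

lemma (in group) inv_cancel_left3 [simp]:
  "x \<in> carrier G \<Longrightarrow> y \<in> carrier G \<Longrightarrow> x \<otimes> (inv x \<otimes> y) = y"
  by (simp add: m_assoc[symmetric])

lemma (in group) subgroup_card_dvd:
  assumes "subgroup H G" shows "card H dvd order G"
  using lagrange[OF assms] by (metis dvd_triv_right)

lemma (in group) subgroup_card_primepow:
  assumes "subgroup H G" "Factorial_Ring.prime p" "order G = p ^ n"
  shows "\<exists>k\<le>n. card H = p ^ k"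
  using subgroup_card_dvd[OF assms(1)] assms(2,3) divides_primepow_nat by auto

lemma (in group) p_dvd_centre:
  assumes fin: "finite (carrier G)" and p: "Factorial_Ring.prime p" and ord: "order G = p ^ n" and n: "n \<ge> 1"
  shows "p dvd card (centre G)"
proof -
  let ?\<phi> = "(\<lambda>g. (\<lambda>h \<in> carrier G. g \<otimes> h \<otimes> (inv g)))"
  interpret A: group_action G "carrier G" ?\<phi> by (rule action_by_conjugation)
  let ?O = "orbits G (carrier G) ?\<phi>"
  have sum1: "(\<Sum>orb\<in>?O. card orb) = card (carrier G)"
    using A.disjoint_sum[OF fin, of "\<lambda>_. 1::nat"] by simp
  have finO: "finite ?O" unfolding orbits_def using fin by simp
  have orbx: "orbit G ?\<phi> x = {x} \<longleftrightarrow> x \<in> centre G" if x: "x \<in> carrier G" for x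
  proof
    assume h: "orbit G ?\<phi> x = {x}"
    have "g \<otimes> x = x \<otimes> g" if g: "g \<in> carrier G" for g
    proof -
      have "g \<otimes> x \<otimes> inv g \<in> orbit G ?\<phi> x" unfolding orbit_def using g x by auto
      hence "g \<otimes> x \<otimes> inv g = x" using h by auto
      hence "g \<otimes> x \<otimes> inv g \<otimes> g = x \<otimes> g" by simp
      thus ?thesis using g x by (simp add: m_assoc)
    qed
    thus "x \<in> centre G" using x by (auto simp: centre_def)
  next
    assume h: "x \<in> centre G"
    have "g \<otimes> x \<otimes> inv g = x" if g: "g \<in> carrier G" for g
      using h g x unfolding centre_def by (auto simp: m_assoc)
    moreover have "x \<in> orbit G ?\<phi> x" by (rule A.orbit_refl[OF x])
    ultimately show "orbit G ?\<phi> x = {x}" unfolding orbit_def using x by auto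
  qed
  have each: "card orb = 1 \<or> p dvd card orb" if o: "orb \<in> ?O" for orb
  proof -
    obtain x where x: "x \<in> carrier G" and ox: "orb = orbit G ?\<phi> x" using o unfolding orbits_def by blast
    have "card (orbit G ?\<phi> x) * card (stabilizer G ?\<phi> x) = p ^ n"
      using A.orbit_stabilizer_theorem[OF x] ord by simp
    hence "p ^ n = card orb * card (stabilizer G ?\<phi> x)" using ox by simp
    hence "card orb dvd p ^ n" by (rule dvdI)
    then obtain i where "i \<le> n" "card orb = p ^ i" using divides_primepow_nat[OF p] by auto
    thus ?thesis by (cases i) auto
  qed
  have "(\<Sum>orb\<in>?O. card orb) mod p = (\<Sum>orb\<in>?O. card orb mod p) mod p" by (simp add: mod_sum_eq)
  also have "(\<Sum>orb\<in>?O. card orb mod p) = (\<Sum>orb\<in>?O. if card orb = 1 then 1 else 0)"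
  proof (rule sum.cong)
    fix orb assume "orb \<in> ?O"
    thus "card orb mod p = (if card orb = 1 then 1 else 0)" using each[of orb] p prime_gt_1_nat[OF p]
      by auto
  qed simp
  also have "\<dots> = card {orb \<in> ?O. card orb = 1}" using finO by (simp add: sum.If_cases Int_def)
  also have "{orb \<in> ?O. card orb = 1} = (\<lambda>z. {z}) ` centre G"
  proof
    show "{orb \<in> ?O. card orb = 1} \<subseteq> (\<lambda>z. {z}) ` centre G"
    proof
      fix orb assume "orb \<in> {orb \<in> ?O. card orb = 1}"
      then obtain x where x: "x \<in> carrier G" and ox: "orb = orbit G ?\<phi> x" and c: "card orb = 1"
        unfolding orbits_def by auto
      have "x \<in> orb" using ox A.orbit_refl[OF x] by simp
      hence "orb = {x}" using c by (metis card_1_singletonE singletonD)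
      thus "orb \<in> (\<lambda>z. {z}) ` centre G" using orbx[OF x] ox by auto
    qed
  next
    show "(\<lambda>z. {z}) ` centre G \<subseteq> {orb \<in> ?O. card orb = 1}"
    proof
      fix o' assume "o' \<in> (\<lambda>z. {z}) ` centre G"
      then obtain z where z: "z \<in> centre G" "o' = {z}" by auto
      hence zc: "z \<in> carrier G" by (auto simp: centre_def)
      have oo: "o' = orbit G ?\<phi> z" using orbx[OF zc] z by simp
      have "o' \<in> ?O" unfolding orbits_def using zc oo by blast
      thus "o' \<in> {orb \<in> ?O. card orb = 1}" using z by simp
    qed
  qed
  also have "card ((\<lambda>z. {z}) ` centre G) = card (centre G)" by (simp add: card_image)
  finally have "(\<Sum>orb\<in>?O. card orb) mod p = card (centre G) mod p" .
  hence "card (carrier G) mod p = card (centre G) mod p" by (simp only: sum1)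
  moreover have "p dvd card (carrier G)" using ord n by (simp add: order_def dvd_power)
  ultimately show ?thesis by (simp add: mod_eq_dvd_iff_nat dvd_eq_mod_eq_0)
qed

lemma (in group) centraliser_subgroup:
  assumes g: "g \<in> carrier G"
  shows "subgroup {h \<in> carrier G. h \<otimes> g = g \<otimes> h} G"
proof
  show "{h \<in> carrier G. h \<otimes> g = g \<otimes> h} \<subseteq> carrier G" by auto
  show "\<one> \<in> {h \<in> carrier G. h \<otimes> g = g \<otimes> h}" using g by simp
  fix x y assume x: "x \<in> {h \<in> carrier G. h \<otimes> g = g \<otimes> h}" and y: "y \<in> {h \<in> carrier G. h \<otimes> g = g \<otimes> h}"
  have xc: "x \<in> carrier G" and yc: "y \<in> carrier G" and ex: "x \<otimes> g = g \<otimes> x" and ey: "y \<otimes> g = g \<otimes> y"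
    using x y by auto
  have "x \<otimes> y \<otimes> g = x \<otimes> (y \<otimes> g)" using xc yc g by (simp add: m_assoc)
  also have "\<dots> = x \<otimes> (g \<otimes> y)" by (simp add: ey)
  also have "\<dots> = (x \<otimes> g) \<otimes> y" using xc yc g by (simp add: m_assoc)
  also have "\<dots> = (g \<otimes> x) \<otimes> y" by (simp add: ex)
  also have "\<dots> = g \<otimes> (x \<otimes> y)" using xc yc g by (simp add: m_assoc)
  finally show "x \<otimes> y \<in> {h \<in> carrier G. h \<otimes> g = g \<otimes> h}" using xc yc by simp
  have "inv x \<otimes> g = inv x \<otimes> (g \<otimes> x) \<otimes> inv x" using g xc by (simp add: m_assoc)
  also have "\<dots> = inv x \<otimes> (x \<otimes> g) \<otimes> inv x" by (simp add: ex)
  also have "\<dots> = g \<otimes> inv x" using g xc by (simp add: m_assoc[symmetric])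
  finally show "inv x \<in> {h \<in> carrier G. h \<otimes> g = g \<otimes> h}" using xc by simp
qed

lemma (in group) centre_big:
  assumes fin: "finite (carrier G)" and p: "Factorial_Ring.prime p" and ord: "order G = p ^ Suc n"
    and cz: "card (centre G) = p ^ n"
  shows "centre G = carrier G"
proof (rule ccontr)
  assume "centre G \<noteq> carrier G"
  moreover have "centre G \<subseteq> carrier G" by (auto simp: centre_def)
  ultimately obtain g where g: "g \<in> carrier G" "g \<notin> centre G" by auto
  let ?C = "{h \<in> carrier G. h \<otimes> g = g \<otimes> h}"
  have sC: "subgroup ?C G" by (rule centraliser_subgroup[OF g(1)])
  have finC: "finite ?C" using fin by simp
  have "centre G \<subseteq> ?C" using g(1) by (auto simp: centre_def)
  moreover have "g \<in> ?C" using g(1) by simp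
  ultimately have "centre G \<subset> ?C" using g(2) by auto
  hence lt: "card (centre G) < card ?C" by (rule psubset_card_mono[OF finC])
  obtain k where k: "k \<le> Suc n" "card ?C = p ^ k" using subgroup_card_primepow[OF sC p ord] by auto
  have p1: "p > 1" using p prime_gt_1_nat by blast
  have "p ^ n < p ^ k" using lt k(2) cz by simp
  hence "k > n" using p1 power_strict_increasing_iff by blast
  hence "k = Suc n" using k by simp
  hence "card ?C = card (carrier G)" using k ord by (simp add: order_def)
  hence "?C = carrier G" using fin by (intro card_subset_eq) auto
  hence "g \<in> centre G" using g(1) by (auto simp: centre_def)
  thus False using g(2) by simp
qed

lemma (in group) comm_of_centre:
  assumes "centre G = carrier G" shows "comm_group G"
proof (rule group_comm_groupI)
  fix x y assume "x \<in> carrier G" "y \<in> carrier G"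
  thus "x \<otimes> y = y \<otimes> x" using assms unfolding centre_def by blast
qed

lemma (in group) order_p2_comm:
  assumes fin: "finite (carrier G)" and p: "Factorial_Ring.prime p" and ord: "order G = p ^ 2"
  shows "comm_group G"
proof -
  obtain k where k: "k \<le> 2" "card (centre G) = p ^ k"
    using subgroup_card_primepow[OF centre_subgroup p ord] by auto
  have "p dvd card (centre G)" using p_dvd_centre[OF fin p ord] by simp
  hence "k \<noteq> 0" using k p prime_gt_1_nat[OF p] by (cases k) auto
  hence "k = 1 \<or> k = 2" using k by auto
  hence "centre G = carrier G"
  proof
    assume "k = 1"
    moreover have "order G = p ^ Suc 1" using ord by (simp only: One_nat_def numeral_2_eq_2)
    ultimately show ?thesis using centre_big[OF fin p, of 1] k by simp
  next
    assume "k = 2"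
    hence "card (centre G) = card (carrier G)" using k ord by (simp add: order_def)
    thus ?thesis using fin by (intro card_subset_eq) (auto simp: centre_def)
  qed
  thus ?thesis by (rule comm_of_centre)
qed

lemma (in group) centre_normal: "centre G \<lhd> G"
  unfolding normal_inv_iff
proof (intro conjI ballI)
  show "subgroup (centre G) G" by (rule centre_subgroup)
  fix x h assume x: "x \<in> carrier G" and h: "h \<in> centre G"
  have hc: "h \<in> carrier G" using h by (auto simp: centre_def)
  have "x \<otimes> h = h \<otimes> x" using h x by (auto simp: centre_def)
  hence "x \<otimes> h \<otimes> inv x = h" using x hc by (simp add: m_assoc)
  thus "x \<otimes> h \<otimes> inv x \<in> centre G" using h by simp
qed

lemma (in group) p3_structure:
  assumes fin: "finite (carrier G)" and p: "Factorial_Ring.prime p" and ord: "order G = p ^ 3"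
    and nc: "\<not> comm_group G"
  shows "derived G (carrier G) = centre G \<and> card (centre G) = p"
proof -
  have p1: "p > 1" using p prime_gt_1_nat by blast
  obtain k where k: "k \<le> 3" "card (centre G) = p ^ k"
    using subgroup_card_primepow[OF centre_subgroup p ord] by auto
  have "p dvd card (centre G)" using p_dvd_centre[OF fin p ord] by simp
  hence "k \<noteq> 0" using k p1 by (cases k) auto
  have "k \<noteq> 3"
  proof
    assume "k = 3"
    hence "card (centre G) = card (carrier G)" using k ord by (simp add: order_def)
    hence "centre G = carrier G" using fin by (intro card_subset_eq) (auto simp: centre_def)
    thus False using nc comm_of_centre by blast
  qed
  moreover have "k \<noteq> 2"
  proof
    assume "k = 2"
    moreover have "order G = p ^ Suc 2" using ord by (simp only: numeral_2_eq_2 numeral_3_eq_3)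
    ultimately have "centre G = carrier G" using centre_big[OF fin p, of 2] k by simp
    thus False using nc comm_of_centre by blast
  qed
  ultimately have k1: "k = 1" using k \<open>k \<noteq> 0\<close> by auto
  hence cz: "card (centre G) = p" using k by simp
  interpret Z: normal "centre G" G by (rule centre_normal)
  have grp: "group (G Mod centre G)" by (rule Z.factorgroup_is_group)
  have "card (rcosets (centre G)) * card (centre G) = order G" by (rule lagrange[OF centre_subgroup])
  hence "card (rcosets (centre G)) * p = p ^ 2 * p" using cz ord by (simp add: power3_eq_cube power2_eq_square)
  hence crc: "card (rcosets (centre G)) = p ^ 2" using p1 by simp
  have finQ: "finite (carrier (G Mod centre G))"
    unfolding FactGroup_def using rcosets_subset_PowG[OF centre_subgroup] fin
    by (simp add: finite_subset)
  have "order (G Mod centre G) = p ^ 2" unfolding order_def FactGroup_def using crc by simp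
  hence "comm_group (G Mod centre G)" using group.order_p2_comm[OF grp finQ p] by simp
  hence dz: "derived G (carrier G) \<subseteq> centre G" by (rule derived_minimal[OF centre_normal])
  have "\<exists>a\<in>carrier G. \<exists>b\<in>carrier G. a \<otimes> b \<noteq> b \<otimes> a"
  proof (rule ccontr)
    assume "\<not> (\<exists>a\<in>carrier G. \<exists>b\<in>carrier G. a \<otimes> b \<noteq> b \<otimes> a)"
    hence "comm_group G" by (intro group_comm_groupI) auto
    thus False using nc by simp
  qed
  then obtain a b where ab: "a \<in> carrier G" "b \<in> carrier G" "a \<otimes> b \<noteq> b \<otimes> a" by blast
  let ?c = "a \<otimes> b \<otimes> inv a \<otimes> inv b"
  have "?c \<in> derived_set G (carrier G)" by (intro UN_I[OF ab(1)] UN_I[OF ab(2)]) simp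
  hence cD: "?c \<in> derived G (carrier G)" unfolding derived_def by (rule generate.incl)
  have c1: "?c \<noteq> \<one>"
  proof
    assume c1: "?c = \<one>"
    have "a \<otimes> b = ?c \<otimes> (b \<otimes> a)" using ab by (simp add: m_assoc)
    also have "\<dots> = \<one> \<otimes> (b \<otimes> a)" by (simp only: c1)
    also have "\<dots> = b \<otimes> a" using ab by simp
    finally have "a \<otimes> b = b \<otimes> a" .
    thus False using ab(3) by contradiction
  qed
  have sD: "subgroup (derived G (carrier G)) G" by (rule derived_is_subgroup) simp
  have oD: "\<one> \<in> derived G (carrier G)" by (rule subgroup.one_closed[OF sD])
  have zc: "centre G \<subseteq> carrier G" unfolding centre_def by blast
  have finZ: "finite (centre G)" using finite_subset[OF zc fin] .
  have finD: "finite (derived G (carrier G))" using finite_subset[OF dz finZ] .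
  have "{\<one>, ?c} \<subseteq> derived G (carrier G)" using cD oD by blast
  hence "card {\<one>, ?c} \<le> card (derived G (carrier G))" by (rule card_mono[OF finD])
  hence c2: "card (derived G (carrier G)) \<ge> 2" using c1 by simp
  obtain j where j: "j \<le> 3" "card (derived G (carrier G)) = p ^ j"
    using subgroup_card_primepow[OF sD p ord] by auto
  have "card (derived G (carrier G)) \<le> p" using card_mono[OF finZ dz] cz by simp
  hence "p ^ j \<le> p ^ 1" using j by simp
  hence "j \<le> 1" using p1 power_le_imp_le_exp by blast
  moreover have "j \<noteq> 0" using j c2 by (cases j) auto
  ultimately have "j = 1" by simp
  hence "card (derived G (carrier G)) = card (centre G)" using j cz by simp
  hence "derived G (carrier G) = centre G" using finZ dz by (intro card_subset_eq) auto
  thus ?thesis using cz by simp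
qed

lemma (in group) pow_mod_p:
  assumes x: "x \<in> carrier G" and xp: "x [^] (p::nat) = \<one>"
  shows "x [^] (n::nat) = x [^] (n mod p)"
proof -
  have "x [^] n = x [^] (p * (n div p) + n mod p)" by simp
  also have "\<dots> = (x [^] p) [^] (n div p) \<otimes> x [^] (n mod p)"
    using x by (simp add: nat_pow_mult nat_pow_pow)
  also have "\<dots> = x [^] (n mod p)" using x xp by simp
  finally show ?thesis .
qed

lemma (in group) pow_coprime_back:
  assumes x: "x \<in> carrier G" and xp: "x [^] (p::nat) = \<one>" and p: "Factorial_Ring.prime p"
    and k: "\<not> p dvd k"
  shows "\<exists>k'::nat. (x [^] (k::nat)) [^] k' = x"
proof -
  have "coprime k p" using prime_imp_coprime[OF p k] by (simp add: coprime_commute)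
  then obtain k' where k': "[k * k' = Suc 0] (mod p)" using cong_solve_coprime_nat by blast
  have p1: "p > 1" using p prime_gt_1_nat by blast
  have "(x [^] k) [^] k' = x [^] (k * k')" using x by (simp add: nat_pow_pow)
  also have "\<dots> = x [^] ((k * k') mod p)" by (rule pow_mod_p[OF x xp])
  also have "(k * k') mod p = Suc 0" using k' p1 unfolding cong_def by simp
  finally show ?thesis using x by auto
qed

lemma (in group) subgroup_pow_closed:
  assumes S: "subgroup S G" and x: "x \<in> S" shows "x [^] (n::nat) \<in> S"
proof (induct n)
  case 0 thus ?case using subgroup.one_closed[OF S] by simp
next
  case (Suc n) thus ?case using subgroup.m_closed[OF S] x by simp
qed

lemma (in group) subgroup_pow_back:
  assumes S: "subgroup S G" and x: "x \<in> carrier G" and xp: "x [^] (p::nat) = \<one>"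
    and p: "Factorial_Ring.prime p" and k: "\<not> p dvd k" and xk: "x [^] (k::nat) \<in> S"
  shows "x \<in> S"
proof -
  obtain k' where "(x [^] k) [^] (k'::nat) = x" using pow_coprime_back[OF x xp p k] by blast
  thus ?thesis using subgroup_pow_closed[OF S xk, of k'] by simp
qed

lemma (in group) decomp:
  assumes S: "subgroup S G" and ST: "S \<subseteq> T" and x: "x \<in> carrier G" and xS: "x \<notin> S"
    and xp: "x [^] (p::nat) = \<one>" and p: "Factorial_Ring.prime p"
    and cl: "\<And>i s. i < p \<Longrightarrow> s \<in> S \<Longrightarrow> x [^] i \<otimes> s \<in> T"
    and finT: "finite T" and cT: "card T = p * card S"
  shows "\<forall>g\<in>T. \<exists>i<p. \<exists>s\<in>S. g = x [^] i \<otimes> s"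
proof -
  let ?f = "\<lambda>(i::nat, s). x [^] i \<otimes> s"
  have Sc: "S \<subseteq> carrier G" using subgroup.subset[OF S] .
  have key: "i = j \<and> s = s'" if ij: "i \<le> j" "j < p" and s: "s \<in> S" "s' \<in> S"
    and eq: "x [^] i \<otimes> s = x [^] j \<otimes> s'" for i j s s'
  proof -
    have sc: "s \<in> carrier G" "s' \<in> carrier G" using s Sc by auto
    have "x [^] j = x [^] i \<otimes> x [^] (j - i)" using x ij by (simp add: nat_pow_mult)
    hence "x [^] i \<otimes> s = x [^] i \<otimes> (x [^] (j - i) \<otimes> s')" using eq x sc by (simp add: m_assoc)
    hence e2: "s = x [^] (j - i) \<otimes> s'" using x sc by (simp del: r_cancel_one r_cancel_one')
    hence "x [^] (j - i) = s \<otimes> inv s'" using x sc by (simp add: m_assoc)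
    hence inS: "x [^] (j - i) \<in> S" using s S by (simp add: subgroup.m_closed subgroup.m_inv_closed)
    have "i = j"
    proof (rule ccontr)
      assume "i \<noteq> j"
      hence "\<not> p dvd (j - i)" using ij by (auto dest: dvd_imp_le)
      hence "x \<in> S" using subgroup_pow_back[OF S x xp p _ inS] by blast
      thus False using xS by simp
    qed
    thus ?thesis using e2 x sc by simp
  qed
  have inj: "inj_on ?f ({..<p} \<times> S)"
  proof (rule inj_onI)
    fix u v assume u: "u \<in> {..<p} \<times> S" and v: "v \<in> {..<p} \<times> S" and e: "?f u = ?f v"
    obtain i s where us: "u = (i, s)" by (cases u)
    obtain j s' where vs: "v = (j, s')" by (cases v)
    have a: "i < p" "s \<in> S" "j < p" "s' \<in> S" using u v us vs by auto
    have eq: "x [^] i \<otimes> s = x [^] j \<otimes> s'" using e us vs by simp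
    have "i = j \<and> s = s'"
    proof (cases "i \<le> j")
      case True thus ?thesis using key[OF True a(3) a(2) a(4) eq] by simp
    next
      case False thus ?thesis using key[of j i s' s] eq a by simp
    qed
    thus "u = v" using us vs by simp
  qed
  have finS: "finite S" using finite_subset[OF ST finT] .
  have sub: "?f ` ({..<p} \<times> S) \<subseteq> T" using cl by auto
  have "card (?f ` ({..<p} \<times> S)) = p * card S" using card_image[OF inj] by (simp add: card_cartesian_product)
  hence "?f ` ({..<p} \<times> S) = T" using sub finT cT by (intro card_subset_eq) auto
  thus ?thesis by force
qed

locale LNR =
  fixes R :: "('a, 'm) ring_scheme" (structure) and p :: nat
  assumes p: "Factorial_Ring.prime p"
    and loc: "local_nearring R"
    and fin: "finite (carrier R)" and crd: "card (carrier R) = p ^ 3"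
    and nc: "\<not> comm_group (add_monoid R)"
    and ex: "\<forall>x\<in>carrier R. x [^]\<^bsub>add_monoid R\<^esub> p = \<zero>\<^bsub>R\<^esub>"

context LNR begin

lemma grp: "group (add_monoid R)"
  using loc unfolding local_nearring_def nearring_with_one_def by blast
lemma mon: "monoid R"
  using loc unfolding local_nearring_def nearring_with_one_def by blast
lemma ldist: "x \<in> carrier R \<Longrightarrow> y \<in> carrier R \<Longrightarrow> z \<in> carrier R \<Longrightarrow> x \<otimes> (y \<oplus> z) = x \<otimes> y \<oplus> x \<otimes> z"
  using loc unfolding local_nearring_def nearring_with_one_def by blast
lemma Lsub: "subgroup (carrier R - Units R) (add_monoid R)"
  using loc unfolding local_nearring_def by blast

end

sublocale LNR \<subseteq> G: group "add_monoid R"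
  rewrites "carrier (add_monoid R) = carrier R"
       and "monoid.mult (add_monoid R) = ring.add R"
       and "monoid.one (add_monoid R) = ring.zero R"
       and "m_inv (add_monoid R) = a_inv R"
  by (rule grp) (simp_all add: a_inv_def)

sublocale LNR \<subseteq> M: monoid R by (rule mon)

context LNR begin

abbreviation pw :: "'a \<Rightarrow> nat \<Rightarrow> 'a" where "pw x n \<equiv> x [^]\<^bsub>add_monoid R\<^esub> n"
abbreviation D where "D \<equiv> derived (add_monoid R) (carrier R)"
abbreviation L where "L \<equiv> carrier R - Units R"
abbreviation cg where "cg a b \<equiv> a \<oplus> \<ominus> b \<in> D"

lemma p1: "p > 1" using p prime_gt_1_nat by blast

lemma ordG: "order (add_monoid R) = p ^ 3" using crd by (simp add: order_def)

lemma Dstruct: "D = centre (add_monoid R) \<and> card (centre (add_monoid R)) = p"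
  using G.p3_structure[OF fin p ordG nc] by simp

lemma cardD: "card D = p" using Dstruct by simp

lemma Dcentre: "D = {z \<in> carrier R. \<forall>g\<in>carrier R. g \<oplus> z = z \<oplus> g}"
  using Dstruct by (simp add: centre_def)

lemma Dc: "d \<in> D \<Longrightarrow> d \<in> carrier R" using Dcentre by blast

lemma Dcomm: "d \<in> D \<Longrightarrow> y \<in> carrier R \<Longrightarrow> y \<oplus> d = d \<oplus> y"
  using Dcentre by blast

lemma Dsg: "subgroup D (add_monoid R)" using G.derived_is_subgroup[of "carrier R"] by simp

lemma Dnormal: "D \<lhd> add_monoid R" using G.derived_self_is_normal by simp

lemma D0: "\<zero> \<in> D" using subgroup.one_closed[OF Dsg] by simp
lemma Dadd: "a \<in> D \<Longrightarrow> b \<in> D \<Longrightarrow> a \<oplus> b \<in> D" using subgroup.m_closed[OF Dsg] by simp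
lemma Dinv: "a \<in> D \<Longrightarrow> \<ominus> a \<in> D" using subgroup.m_inv_closed[OF Dsg] by (simp add: a_inv_def)
lemma Dpow: "a \<in> D \<Longrightarrow> pw a n \<in> D" using G.subgroup_pow_closed[OF Dsg] by simp

lemma expo: "x \<in> carrier R \<Longrightarrow> pw x p = \<zero>" using ex by blast

lemma finD: "finite D" using finite_subset[OF _ fin] Dc by blast

lemma lz: assumes x: "x \<in> carrier R" shows "x \<otimes> \<zero> = \<zero>"
proof -
  have "x \<otimes> (\<zero> \<oplus> \<zero>) = x \<otimes> \<zero> \<oplus> x \<otimes> \<zero>" by (rule ldist[OF x]) simp_all
  hence "x \<otimes> \<zero> = x \<otimes> \<zero> \<oplus> x \<otimes> \<zero>" by simp
  thus ?thesis using x by (simp del: G.r_one)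
qed

lemma linv: assumes x: "x \<in> carrier R" and y: "y \<in> carrier R" shows "x \<otimes> \<ominus> y = \<ominus> (x \<otimes> y)"
proof -
  have "x \<otimes> \<ominus> y \<oplus> x \<otimes> y = x \<otimes> (\<ominus> y \<oplus> y)" using ldist[OF x, of "\<ominus> y" y] y by simp
  also have "\<dots> = \<zero>" using x y lz by simp
  finally have "x \<otimes> \<ominus> y \<oplus> x \<otimes> y = \<zero>" .
  thus ?thesis using x y by (simp add: G.inv_equality)
qed

lemma lpow: assumes x: "x \<in> carrier R" and y: "y \<in> carrier R" shows "x \<otimes> pw y n = pw (x \<otimes> y) n"
proof (induct n)
  case 0 thus ?case using lz x by simp
next
  case (Suc n) thus ?case using ldist x y by simp
qed

lemma lhom: assumes x: "x \<in> carrier R"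
  shows "group_hom (add_monoid R) (add_monoid R) (\<lambda>y. x \<otimes> y)"
  unfolding group_hom_def group_hom_axioms_def
  using grp x ldist by (auto simp: hom_def)

lemma lD: assumes x: "x \<in> carrier R" and d: "d \<in> D" shows "x \<otimes> d \<in> D"
proof -
  interpret H: group_hom "add_monoid R" "add_monoid R" "\<lambda>y. x \<otimes> y" by (rule lhom[OF x])
  have "derived (add_monoid R) ((\<lambda>y. x \<otimes> y) ` carrier R) = (\<lambda>y. x \<otimes> y) ` D"
    using H.derived_img[of "carrier R"] by simp
  moreover have "derived (add_monoid R) ((\<lambda>y. x \<otimes> y) ` carrier R) \<subseteq> D"
    using G.mono_derived[of "(\<lambda>y. x \<otimes> y) ` carrier R" "carrier R"] x by auto
  ultimately show ?thesis using d by blast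
qed

end

context LNR begin

lemma rinv_unit:
  assumes x: "x \<in> carrier R" and y: "y \<in> carrier R" and xy: "x \<otimes> y = \<one>"
  shows "x \<in> Units R"
proof -
  let ?f = "\<lambda>z. y \<otimes> z"
  have inj: "inj_on ?f (carrier R)"
  proof (rule inj_onI)
    fix a b assume a: "a \<in> carrier R" and b: "b \<in> carrier R" and e: "y \<otimes> a = y \<otimes> b"
    have "(x \<otimes> y) \<otimes> a = (x \<otimes> y) \<otimes> b" using e x y a b by (simp add: M.m_assoc)
    thus "a = b" using xy a b by simp
  qed
  have sub: "?f ` carrier R \<subseteq> carrier R" using y by auto
  have "?f ` carrier R = carrier R" by (rule endo_inj_surj[OF fin sub inj])
  hence "\<one> \<in> ?f ` carrier R" by simp
  then obtain c where c: "c \<in> carrier R" "y \<otimes> c = \<one>" by auto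
  have "x = x \<otimes> (y \<otimes> c)" using c x by simp
  also have "\<dots> = (x \<otimes> y) \<otimes> c" using x y c by (simp add: M.m_assoc)
  also have "\<dots> = c" using xy c by simp
  finally have "y \<otimes> x = \<one>" using c by simp
  thus ?thesis using x y xy unfolding Units_def by blast
qed

lemma L_rmul: assumes x: "x \<in> L" and y: "y \<in> carrier R" shows "x \<otimes> y \<in> L"
proof (rule ccontr)
  assume "x \<otimes> y \<notin> L"
  hence u: "x \<otimes> y \<in> Units R" using x y by auto
  let ?w = "inv (x \<otimes> y)"
  have w: "?w \<in> carrier R" using u by simp
  have "(x \<otimes> y) \<otimes> ?w = \<one>" using u by simp
  hence "x \<otimes> (y \<otimes> ?w) = \<one>" using x y w by (simp add: M.m_assoc)
  hence "x \<in> Units R" using rinv_unit[of x "y \<otimes> ?w"] x y w by simp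
  thus False using x by simp
qed

lemma U_lmul_L: assumes u: "u \<in> Units R" and x: "x \<in> L" shows "u \<otimes> x \<in> L"
proof (rule ccontr)
  assume "u \<otimes> x \<notin> L"
  hence ux: "u \<otimes> x \<in> Units R" using u x by auto
  have uc: "u \<in> carrier R" using u by (rule M.Units_closed)
  have "inv u \<otimes> (u \<otimes> x) = x" using u uc x by (simp add: M.m_assoc[symmetric])
  moreover have "inv u \<otimes> (u \<otimes> x) \<in> Units R" using u ux by simp
  ultimately show False using x by simp
qed

lemma regular: assumes u: "u \<in> Units R" and h: "h \<in> Units R" and e: "u \<otimes> h = h" shows "u = \<one>"
proof -
  have uc: "u \<in> carrier R" using u by (rule M.Units_closed)
  have "u = u \<otimes> (h \<otimes> inv h)" using uc h by simp
  also have "\<dots> = (u \<otimes> h) \<otimes> inv h" using uc M.Units_closed[OF h] M.Units_inv_closed[OF h] by (simp add: M.m_assoc)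
  also have "\<dots> = \<one>" using e h by simp
  finally show ?thesis .
qed

lemma oneU: "\<one> \<in> Units R" by simp
lemma zeroL: "\<zero> \<in> L" using subgroup.one_closed[OF Lsub] by simp
lemma Ladd: "a \<in> L \<Longrightarrow> b \<in> L \<Longrightarrow> a \<oplus> b \<in> L" using subgroup.m_closed[OF Lsub] by simp
lemma Linv: "a \<in> L \<Longrightarrow> \<ominus> a \<in> L" using subgroup.m_inv_closed[OF Lsub] by (simp add: a_inv_def)
lemma Lpow: "a \<in> L \<Longrightarrow> pw a n \<in> L" using G.subgroup_pow_closed[OF Lsub] by simp

lemma cg_iff: assumes a: "a \<in> carrier R" and b: "b \<in> carrier R"
  shows "cg a b \<longleftrightarrow> (\<exists>d\<in>D. a = b \<oplus> d)"
proof
  assume h: "cg a b"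
  have "b \<oplus> (a \<oplus> \<ominus> b) = (a \<oplus> \<ominus> b) \<oplus> b" using Dcomm[OF h b] .
  also have "\<dots> = a" using a b by (simp add: G.m_assoc)
  finally show "\<exists>d\<in>D. a = b \<oplus> d" using h by metis
next
  assume "\<exists>d\<in>D. a = b \<oplus> d"
  then obtain d where d: "d \<in> D" "a = b \<oplus> d" by blast
  have dc: "d \<in> carrier R" using Dc[OF d(1)] .
  have "a \<oplus> \<ominus> b = d \<oplus> b \<oplus> \<ominus> b" using d Dcomm[OF d(1) b] by simp
  also have "\<dots> = d" using dc b by (simp add: G.m_assoc)
  finally show "cg a b" using d by simp
qed

lemma cg_refl: "a \<in> carrier R \<Longrightarrow> cg a a" using D0 by simp

lemma cg_sym: assumes a: "a \<in> carrier R" and b: "b \<in> carrier R" and h: "cg a b" shows "cg b a"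
proof -
  have "\<ominus> (a \<oplus> \<ominus> b) = b \<oplus> \<ominus> a" using a b by (simp add: G.inv_mult_group)
  thus ?thesis using Dinv[OF h] by simp
qed

lemma cg_trans: assumes a: "a \<in> carrier R" and b: "b \<in> carrier R" and c: "c \<in> carrier R"
  and h1: "cg a b" and h2: "cg b c" shows "cg a c"
proof -
  have "(a \<oplus> \<ominus> b) \<oplus> (b \<oplus> \<ominus> c) = a \<oplus> \<ominus> c" using a b c by (simp add: G.m_assoc)
  thus ?thesis using Dadd[OF h1 h2] by simp
qed

lemma cg_add: assumes a: "a \<in> carrier R" and a': "a' \<in> carrier R" and b: "b \<in> carrier R" and b': "b' \<in> carrier R"
  and h1: "cg a a'" and h2: "cg b b'" shows "cg (a \<oplus> b) (a' \<oplus> b')"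
proof -
  obtain d1 where d1: "d1 \<in> D" "a = a' \<oplus> d1" using cg_iff[OF a a'] h1 by blast
  obtain d2 where d2: "d2 \<in> D" "b = b' \<oplus> d2" using cg_iff[OF b b'] h2 by blast
  have c1: "d1 \<in> carrier R" "d2 \<in> carrier R" using Dc d1 d2 by auto
  have "a \<oplus> b = a' \<oplus> (d1 \<oplus> b') \<oplus> d2" using d1 d2 c1 a' b' by (simp add: G.m_assoc)
  also have "\<dots> = a' \<oplus> (b' \<oplus> d1) \<oplus> d2" using Dcomm[OF d1(1) b'] by simp
  also have "\<dots> = (a' \<oplus> b') \<oplus> (d1 \<oplus> d2)" using c1 a' b' by (simp add: G.m_assoc)
  finally show ?thesis using cg_iff a b a' b' Dadd[OF d1(1) d2(1)] by (meson G.m_closed)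
qed

lemma cg_pow: assumes a: "a \<in> carrier R" and a': "a' \<in> carrier R" and h: "cg a a'"
  shows "cg (pw a n) (pw a' n)"
proof -
  obtain d where d: "d \<in> D" "a = a' \<oplus> d" using cg_iff[OF a a'] h by blast
  have dc: "d \<in> carrier R" using Dc d by auto
  have e: "pw a n = pw a' n \<oplus> pw d n" using d G.pow_mult_distrib[OF _ a' dc] Dcomm[OF d(1) a'] by simp
  have "\<exists>d'\<in>D. pw a n = pw a' n \<oplus> d'" using e Dpow[OF d(1)] by blast
  thus ?thesis using cg_iff[OF G.nat_pow_closed[OF a] G.nat_pow_closed[OF a']] by blast
qed

lemma cg_lmul: assumes x: "x \<in> carrier R" and a: "a \<in> carrier R" and b: "b \<in> carrier R" and h: "cg a b"
  shows "cg (x \<otimes> a) (x \<otimes> b)"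
proof -
  obtain d where d: "d \<in> D" "a = b \<oplus> d" using cg_iff[OF a b] h by blast
  have dc: "d \<in> carrier R" using Dc d by auto
  have e: "x \<otimes> a = x \<otimes> b \<oplus> x \<otimes> d" using d ldist[OF x b dc] by simp
  have "\<exists>d'\<in>D. x \<otimes> a = x \<otimes> b \<oplus> d'" using e lD[OF x d(1)] by blast
  thus ?thesis using cg_iff[OF M.m_closed[OF x a] M.m_closed[OF x b]] by blast
qed

lemma cg_Dr: assumes a: "a \<in> carrier R" and d: "d \<in> D" shows "cg (a \<oplus> d) a"
  using cg_iff[of "a \<oplus> d" a] a d Dc by auto

lemma cg_Dl: assumes a: "a \<in> carrier R" and d: "d \<in> D" shows "cg (d \<oplus> a) a"
  using cg_Dr[OF a d] Dcomm[OF d a] by simp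

lemma cg_DD: assumes a: "a \<in> D" and b: "b \<in> D" shows "cg a b"
  using Dadd[OF a Dinv[OF b]] .

lemma D_L: assumes d: "d \<in> D" shows "d \<in> L"
proof (rule ccontr)
  assume "d \<notin> L"
  hence du: "d \<in> Units R" using Dc[OF d] by simp
  have "inv d \<in> carrier R" using du by simp
  hence "inv d \<otimes> d \<in> D" by (rule lD[OF _ d])
  moreover have "inv d \<otimes> d = \<one>" using du by simp
  ultimately have oneD: "\<one> \<in> D" by simp
  have "carrier R \<subseteq> D"
  proof
    fix x assume x: "x \<in> carrier R"
    have "x \<otimes> \<one> \<in> D" by (rule lD[OF x oneD])
    thus "x \<in> D" using x by simp
  qed
  hence "card (carrier R) \<le> card D" using finD by (rule card_mono[rotated])
  hence "p ^ 3 \<le> p" using crd cardD by simp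
  moreover have "p ^ 1 < p ^ 3" using p1 power_strict_increasing_iff[of p 1 3] by simp
  ultimately show False by simp
qed

end

context LNR begin

lemma killD:
  assumes x: "x \<in> carrier R" and A: "\<forall>y\<in>carrier R. x \<otimes> y \<in> A" and Ac: "A \<subseteq> carrier R"
    and comm: "\<forall>a\<in>A. \<forall>b\<in>A. a \<oplus> b = b \<oplus> a" and d: "d \<in> D"
  shows "x \<otimes> d = \<zero>"
proof -
  interpret H: group_hom "add_monoid R" "add_monoid R" "\<lambda>y. x \<otimes> y" by (rule lhom[OF x])
  let ?S = "kernel (add_monoid R) (add_monoid R) (\<lambda>y. x \<otimes> y)"
  have sS: "subgroup ?S (add_monoid R)" by (rule H.subgroup_kernel)
  have "derived_set (add_monoid R) (carrier R) \<subseteq> ?S"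
  proof
    fix h assume "h \<in> derived_set (add_monoid R) (carrier R)"
    then obtain h1 h2 where h: "h1 \<in> carrier R" "h2 \<in> carrier R" "h = h1 \<oplus> h2 \<oplus> \<ominus> h1 \<oplus> \<ominus> h2"
      by (auto simp: a_inv_def)
    have xa: "x \<otimes> h1 \<in> A" "x \<otimes> h2 \<in> A" using A h by auto
    have c1: "x \<otimes> h1 \<in> carrier R" "x \<otimes> h2 \<in> carrier R" using x h by auto
    have "x \<otimes> h = x \<otimes> h1 \<oplus> x \<otimes> h2 \<oplus> \<ominus> (x \<otimes> h1) \<oplus> \<ominus> (x \<otimes> h2)"
      using h x by (simp add: ldist linv)
    also have "\<dots> = x \<otimes> h2 \<oplus> x \<otimes> h1 \<oplus> \<ominus> (x \<otimes> h1) \<oplus> \<ominus> (x \<otimes> h2)"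
      using comm xa by metis
    also have "\<dots> = \<zero>" using c1 by (simp add: G.m_assoc)
    finally show "h \<in> ?S" using h unfolding kernel_def by simp
  qed
  hence "D \<subseteq> ?S" unfolding derived_def using G.generate_subgroup_incl[OF _ sS] by simp
  thus ?thesis using d unfolding kernel_def by auto
qed

lemma Dcomm2: "\<forall>a\<in>D. \<forall>b\<in>D. a \<oplus> b = b \<oplus> a" using Dcomm Dc by blast

lemma cyc: assumes c: "c \<in> D" and c0: "c \<noteq> \<zero>" and d: "d \<in> D"
  shows "\<exists>m<p. d = pw c m"
proof -
  have s0: "subgroup {\<zero>} (add_monoid R)" using G.triv_subgroup by simp
  have cc: "c \<in> carrier R" using Dc[OF c] .
  have "\<forall>g\<in>D. \<exists>i<p. \<exists>s\<in>{\<zero>}. g = pw c i \<oplus> s"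
    by (rule G.decomp[OF s0 _ cc _ expo[OF cc] p]) (use c0 cc Dpow[OF c] in \<open>auto simp: D0 finD cardD\<close>)
  thus ?thesis using d cc by auto
qed

lemma L_ne_D: "L \<noteq> D"
proof
  assume LD: "L = D"
  have z0: "\<zero> \<otimes> y = \<zero>" if y: "y \<in> carrier R" for y
  proof -
    have inD: "\<zero> \<otimes> y' \<in> D" if "y' \<in> carrier R" for y' using L_rmul[OF zeroL that] LD by simp
    have "\<zero> \<otimes> (\<zero> \<otimes> y) = \<zero>"
      by (rule killD[of "\<zero>" D]) (use inD Dc Dcomm2 y in auto)
    moreover have "\<zero> \<otimes> (\<zero> \<otimes> y) = (\<zero> \<otimes> \<zero>) \<otimes> y" using y by (simp add: M.m_assoc)
    ultimately show ?thesis using lz by simp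
  qed
  have "D \<noteq> {\<zero>}" using cardD p1 by auto
  then obtain c where c: "c \<in> D" "c \<noteq> \<zero>" using D0 by blast
  have cc: "c \<in> carrier R" using Dc[OF c(1)] .
  let ?S = "(\<lambda>(m, d). pw \<one> m \<oplus> d) ` ({..<p} \<times> D)"
  have "card ?S \<le> card ({..<p} \<times> D)" by (rule card_image_le) (simp add: finD)
  also have "\<dots> = p ^ 2" using cardD by (simp add: card_cartesian_product power2_eq_square)
  also have "\<dots> < p ^ 3" using p1 power_strict_increasing_iff[of p 2 3] by simp
  finally have "card ?S < card (carrier R)" using crd by simp
  hence "\<not> carrier R \<subseteq> ?S"
    using card_mono[of ?S "carrier R"] finite_imageI[of "{..<p} \<times> D"] finD by auto
  then obtain u where u: "u \<in> carrier R" "u \<notin> ?S" by blast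
  have "u \<notin> D"
  proof
    assume "u \<in> D"
    hence "u \<in> ?S" using u p1 by (intro image_eqI[of _ _ "(0, u)"]) auto
    thus False using u by simp
  qed
  hence uU: "u \<in> Units R" using u LD by blast
  have "c \<otimes> u \<in> D" using L_rmul[of c u] c LD u by simp
  then obtain m where m: "m < p" "c \<otimes> u = pw c m" using cyc[OF c] by blast
  let ?y = "\<ominus> (pw \<one> m) \<oplus> u"
  have yc: "?y \<in> carrier R" using u by simp
  have "c \<otimes> ?y = c \<otimes> \<ominus> (pw \<one> m) \<oplus> c \<otimes> u" using ldist[OF cc _ u(1)] by simp
  also have "\<dots> = \<ominus> (pw c m) \<oplus> pw c m" using cc m by (simp add: linv lpow)
  also have "\<dots> = \<zero>" using cc by simp
  finally have cy: "c \<otimes> ?y = \<zero>" .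
  have "?y \<notin> D"
  proof
    assume yD: "?y \<in> D"
    have "pw \<one> m \<oplus> ?y = u" using u by (simp add: G.m_assoc[symmetric])
    hence "u \<in> ?S" using m yD by (intro image_eqI[of _ _ "(m, ?y)"]) auto
    thus False using u by simp
  qed
  hence yU: "?y \<in> Units R" using yc LD by blast
  have "c = c \<otimes> (?y \<otimes> inv ?y)" using yU cc by simp
  also have "\<dots> = (c \<otimes> ?y) \<otimes> inv ?y" using cc yc yU by (simp add: M.m_assoc)
  also have "\<dots> = \<zero>" using cy z0 yU by simp
  finally show False using c by simp
qed

lemma cardL: "card L = p ^ 2"
proof -
  obtain k where k: "k \<le> 3" "card L = p ^ k" using G.subgroup_card_primepow[OF Lsub p ordG] by auto
  have finL: "finite L" using fin by simp
  have DL: "D \<subseteq> L" using D_L by blast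
  have "card D \<le> card L" using card_mono[OF finL DL] .
  hence "k \<noteq> 0" using k cardD p1 by (cases k) auto
  moreover have "k \<noteq> 3"
  proof
    assume "k = 3"
    hence "card L = card (carrier R)" using k crd by simp
    hence "L = carrier R" using fin by (intro card_subset_eq) auto
    thus False using oneU by blast
  qed
  moreover have "k \<noteq> 1"
  proof
    assume "k = 1"
    hence "card D = card L" using k cardD by simp
    hence "D = L" using finL DL by (intro card_subset_eq) auto
    thus False using L_ne_D by simp
  qed
  ultimately have "k = 2" using k by auto
  thus ?thesis using k by simp
qed

lemma decompL: assumes e: "e \<in> L" "e \<notin> D" shows "\<forall>w\<in>L. \<exists>m<p. \<exists>d\<in>D. w = pw e m \<oplus> d"
proof -
  have ec: "e \<in> carrier R" using e by simp
  have DL: "D \<subseteq> L" using D_L by blast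
  have cl: "\<And>i s. i < p \<Longrightarrow> s \<in> D \<Longrightarrow> pw e i \<oplus> s \<in> L" using Ladd Lpow e(1) D_L by blast
  show ?thesis
    by (rule G.decomp[OF Dsg DL ec e(2) expo[OF ec] p cl]) (auto simp: fin cardL cardD power2_eq_square)
qed

lemma decompH: "\<forall>y\<in>carrier R. \<exists>a<p. \<exists>w\<in>L. y = pw \<one> a \<oplus> w"
  by (rule G.decomp[OF Lsub _ _ _ expo[OF M.one_closed] p])
     (auto simp: fin cardL crd power3_eq_cube power2_eq_square)

lemma exL: "\<exists>e. e \<in> L \<and> e \<notin> D" using L_ne_D D_L by blast

lemma Lcomm: assumes a: "a \<in> L" and b: "b \<in> L" shows "a \<oplus> b = b \<oplus> a"
proof -
  obtain e where e: "e \<in> L" "e \<notin> D" using exL by blast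
  have ec: "e \<in> carrier R" using e by simp
  obtain m1 d1 where 1: "d1 \<in> D" "a = pw e m1 \<oplus> d1" using decompL[OF e] a by blast
  obtain m2 d2 where 2: "d2 \<in> D" "b = pw e m2 \<oplus> d2" using decompL[OF e] b by blast
  have dc: "d1 \<in> carrier R" "d2 \<in> carrier R" using Dc 1 2 by auto
  have c1: "d1 \<oplus> pw e m2 = pw e m2 \<oplus> d1" using Dcomm[OF 1(1), of "pw e m2"] ec by simp
  have c2: "d2 \<oplus> pw e m1 = pw e m1 \<oplus> d2" using Dcomm[OF 2(1), of "pw e m1"] ec by simp
  have c3: "d1 \<oplus> d2 = d2 \<oplus> d1" using Dcomm[OF 1(1) dc(2)] by simp
  have "a \<oplus> b = pw e m1 \<oplus> (d1 \<oplus> pw e m2) \<oplus> d2" using 1 2 dc ec by (simp add: G.m_assoc)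
  also have "\<dots> = pw e m1 \<oplus> (pw e m2 \<oplus> d1) \<oplus> d2" by (simp only: c1)
  also have "\<dots> = pw e m1 \<oplus> pw e m2 \<oplus> (d1 \<oplus> d2)" using dc ec by (simp add: G.m_assoc)
  also have "\<dots> = pw e (m1 + m2) \<oplus> (d1 \<oplus> d2)" using ec by (simp add: G.nat_pow_mult)
  also have "\<dots> = pw e (m2 + m1) \<oplus> (d2 \<oplus> d1)" by (simp only: c3 add.commute)
  also have "\<dots> = pw e m2 \<oplus> pw e m1 \<oplus> (d2 \<oplus> d1)" using ec by (simp add: G.nat_pow_mult)
  also have "\<dots> = pw e m2 \<oplus> (pw e m1 \<oplus> d2) \<oplus> d1" using dc ec by (simp add: G.m_assoc)
  also have "\<dots> = pw e m2 \<oplus> (d2 \<oplus> pw e m1) \<oplus> d1" by (simp only: c2)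
  also have "\<dots> = b \<oplus> a" using 1 2 dc ec by (simp add: G.m_assoc)
  finally show ?thesis .
qed

lemma Lcomm2: "\<forall>a\<in>L. \<forall>b\<in>L. a \<oplus> b = b \<oplus> a" using Lcomm by blast

lemma killL: assumes x: "x \<in> L" and d: "d \<in> D" shows "x \<otimes> d = \<zero>"
  by (rule killD[of x L]) (use x d L_rmul Lcomm2 in auto)

end

lemma fermat_p:
  assumes p: "Factorial_Ring.prime (p::nat)" shows "m ^ p mod p = m mod p"
proof (cases "p dvd m")
  case True
  have "p dvd m ^ p" using dvd_trans[OF True dvd_power[of p m]] prime_gt_0_nat[OF p] by simp
  thus ?thesis using True by simp
next
  case False
  have "[m ^ (p - 1) = 1] (mod p)" by (rule fermat_theorem[OF p False])
  hence "[m * m ^ (p - 1) = m * 1] (mod p)" by (rule cong_scalar_left)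
  moreover have "m * m ^ (p - 1) = m ^ p" using prime_gt_0_nat[OF p]
    by (simp add: power_eq_if)
  ultimately show ?thesis unfolding cong_def by simp
qed

context LNR begin

lemma one_plus_D_unit: assumes d: "d \<in> D" shows "\<one> \<oplus> d \<in> Units R"
proof (rule ccontr)
  have dc: "d \<in> carrier R" using Dc[OF d] .
  assume "\<one> \<oplus> d \<notin> Units R"
  hence "\<one> \<oplus> d \<in> L" using dc by simp
  hence "(\<one> \<oplus> d) \<oplus> \<ominus> d \<in> L" using Ladd Linv D_L[OF d] by blast
  hence "\<one> \<in> L" using dc by (simp add: G.m_assoc)
  thus False by simp
qed

lemma plus_D_unit: assumes d: "d \<in> D" and h: "h \<in> Units R" shows "h \<oplus> d \<in> Units R"
proof (rule ccontr)
  have dc: "d \<in> carrier R" using Dc[OF d] .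
  have hc: "h \<in> carrier R" using h by (rule M.Units_closed)
  assume "h \<oplus> d \<notin> Units R"
  hence "h \<oplus> d \<in> L" using dc hc by simp
  hence "(h \<oplus> d) \<oplus> \<ominus> d \<in> L" using Ladd Linv D_L[OF d] by blast
  hence "h \<in> L" using dc hc by (simp add: G.m_assoc)
  thus False using h by simp
qed

lemma A1: assumes d: "d \<in> D" and k: "k \<in> D" shows "(\<one> \<oplus> d) \<otimes> k = k"
proof (cases "d = \<zero>")
  case True thus ?thesis using Dc[OF k] by simp
next
  case False
  let ?u = "\<one> \<oplus> d"
  have dc: "d \<in> carrier R" using Dc[OF d] .
  have uU: "?u \<in> Units R" by (rule one_plus_D_unit[OF d])
  have uc: "?u \<in> carrier R" using dc by simp
  have fixex: "\<exists>k\<in>D. k \<noteq> \<zero> \<and> ?u \<otimes> k = k"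
  proof (rule ccontr)
    assume nf: "\<not> (\<exists>k\<in>D. k \<noteq> \<zero> \<and> ?u \<otimes> k = k)"
    let ?t = "\<lambda>k. ?u \<otimes> k \<oplus> \<ominus> k"
    have tD: "?t k \<in> D" if "k \<in> D" for k using lD[OF uc that] Dinv[OF that] Dadd by blast
    have inj: "inj_on ?t D"
    proof (rule inj_onI)
      fix k1 k2 assume k1: "k1 \<in> D" and k2: "k2 \<in> D" and e: "?t k1 = ?t k2"
      have c1: "k1 \<in> carrier R" "k2 \<in> carrier R" using Dc k1 k2 by auto
      let ?a = "?u \<otimes> k1" and ?b = "?u \<otimes> k2"
      have aD: "?a \<in> D" and bD: "?b \<in> D" using lD[OF uc] k1 k2 by auto
      have ab: "?a \<in> carrier R" "?b \<in> carrier R" using aD bD Dc by auto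
      have "?a = ?a \<oplus> \<ominus> k1 \<oplus> k1" using ab c1 by (simp add: G.m_assoc)
      also have "\<dots> = ?b \<oplus> \<ominus> k2 \<oplus> k1" using e by simp
      finally have ea: "?a = ?b \<oplus> \<ominus> k2 \<oplus> k1" .
      have "?u \<otimes> (k1 \<oplus> \<ominus> k2) = ?a \<oplus> \<ominus> ?b" using uc c1 by (simp add: ldist linv)
      also have "\<dots> = ?b \<oplus> (\<ominus> k2 \<oplus> k1) \<oplus> \<ominus> ?b" using ea ab c1 by (simp add: G.m_assoc)
      also have "\<dots> = (\<ominus> k2 \<oplus> k1) \<oplus> ?b \<oplus> \<ominus> ?b"
        using Dcomm[OF bD, of "\<ominus> k2 \<oplus> k1"] c1 by simp
      also have "\<dots> = \<ominus> k2 \<oplus> k1" using ab c1 by (simp add: G.m_assoc)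
      also have "\<dots> = k1 \<oplus> \<ominus> k2" using Dcomm[OF Dinv[OF k2] c1(1)] by simp
      finally have fx: "?u \<otimes> (k1 \<oplus> \<ominus> k2) = k1 \<oplus> \<ominus> k2" .
      have "k1 \<oplus> \<ominus> k2 \<in> D" using Dadd[OF k1 Dinv[OF k2]] .
      hence "k1 \<oplus> \<ominus> k2 = \<zero>" using nf fx by blast
      moreover have "k1 = (k1 \<oplus> \<ominus> k2) \<oplus> k2" using c1 by (simp add: G.m_assoc)
      ultimately show "k1 = k2" using c1 by simp
    qed
    have "?t ` D \<subseteq> D" using tD by blast
    hence tDD: "?t ` D = D" by (rule endo_inj_surj[OF finD _ inj])
    have "\<ominus> d \<in> ?t ` D" using Dinv[OF d] by (simp only: tDD)
    then obtain k0 where k0': "k0 \<in> D" "\<ominus> d = ?t k0" by (rule imageE)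
    hence k0: "k0 \<in> D" "?u \<otimes> k0 \<oplus> \<ominus> k0 = \<ominus> d" by simp_all
    have k0c: "k0 \<in> carrier R" using Dc k0 by auto
    have uk0c: "?u \<otimes> k0 \<in> carrier R" using uc k0c by simp
    have uk0: "?u \<otimes> k0 = \<ominus> d \<oplus> k0"
    proof -
      have "?u \<otimes> k0 = ?u \<otimes> k0 \<oplus> \<ominus> k0 \<oplus> k0" using uk0c k0c by (simp add: G.m_assoc)
      also have "\<dots> = \<ominus> d \<oplus> k0" using k0 by simp
      finally show ?thesis .
    qed
    have "?u \<otimes> (\<one> \<oplus> k0) = ?u \<otimes> \<one> \<oplus> ?u \<otimes> k0" using ldist[OF uc _ k0c] by simp
    also have "\<dots> = \<one> \<oplus> d \<oplus> (\<ominus> d \<oplus> k0)" using uc uk0 by simp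
    also have "\<dots> = \<one> \<oplus> k0" using dc k0c by (simp add: G.m_assoc)
    finally have "?u \<otimes> (\<one> \<oplus> k0) = \<one> \<oplus> k0" .
    moreover have "\<one> \<oplus> k0 \<in> Units R" by (rule one_plus_D_unit[OF k0(1)])
    ultimately have "?u = \<one>" using regular[OF uU] by blast
    hence "d = \<zero>" using dc by simp
    thus False using False by simp
  qed
  then obtain k1 where k1: "k1 \<in> D" "k1 \<noteq> \<zero>" "?u \<otimes> k1 = k1" by blast
  obtain m where m: "k = pw k1 m" using cyc[OF k1(1,2) k] by blast
  have "?u \<otimes> k = pw (?u \<otimes> k1) m" using m lpow[OF uc] Dc[OF k1(1)] by simp
  thus ?thesis using m k1 by simp
qed

lemma upow: assumes d: "d \<in> D" shows "(\<one> \<oplus> d) [^] (n::nat) = \<one> \<oplus> pw d n"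
proof (induct n)
  case 0 thus ?case by simp
next
  case (Suc n)
  have dc: "d \<in> carrier R" using Dc[OF d] .
  have uc: "\<one> \<oplus> d \<in> carrier R" using dc by simp
  have "(\<one> \<oplus> d) [^] Suc n = (\<one> \<oplus> d) \<otimes> (\<one> \<oplus> d) [^] n" by (rule M.nat_pow_Suc2[OF uc])
  also have "\<dots> = (\<one> \<oplus> d) \<otimes> (\<one> \<oplus> pw d n)" using Suc by simp
  also have "\<dots> = (\<one> \<oplus> d) \<otimes> \<one> \<oplus> (\<one> \<oplus> d) \<otimes> pw d n" using ldist[OF uc] dc by simp
  also have "(\<one> \<oplus> d) \<otimes> pw d n = pw d n" using A1[OF d Dpow[OF d]] .
  also have "(\<one> \<oplus> d) \<otimes> \<one> \<oplus> pw d n = \<one> \<oplus> (d \<oplus> pw d n)" using uc dc by (simp add: G.m_assoc)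
  also have "d \<oplus> pw d n = pw d (Suc n)" by (rule G.nat_pow_Suc2[OF dc, symmetric])
  finally show ?case .
qed

lemma upow_p: assumes d: "d \<in> D" shows "(\<one> \<oplus> d) [^] p = \<one>"
  using upow[OF d, of p] expo Dc[OF d] by simp

lemma A2: assumes d: "d \<in> D" and e: "e \<in> L" "e \<notin> D" shows "cg ((\<one> \<oplus> d) \<otimes> e) e"
proof -
  let ?u = "\<one> \<oplus> d"
  have dc: "d \<in> carrier R" using Dc[OF d] .
  have uU: "?u \<in> Units R" by (rule one_plus_D_unit[OF d])
  have uc: "?u \<in> carrier R" using dc by simp
  have ec: "e \<in> carrier R" using e by simp
  have ueL: "?u \<otimes> e \<in> L" by (rule U_lmul_L[OF uU e(1)])
  then obtain m d1 where md: "d1 \<in> D" "?u \<otimes> e = pw e m \<oplus> d1" using decompL[OF e] by blast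
  have ue: "cg (?u \<otimes> e) (pw e m)" using md cg_Dr[OF _ md(1), of "pw e m"] ec by simp
  have iter: "cg ((?u [^] n) \<otimes> e) (pw e (m ^ n))" for n
  proof (induct n)
    case 0 thus ?case using ec cg_refl by simp
  next
    case (Suc n)
    have c1: "(?u [^] n) \<otimes> e \<in> carrier R" using uc ec by simp
    have E1: "(?u [^] Suc n) \<otimes> e = ?u \<otimes> ((?u [^] n) \<otimes> e)"
      using uc ec by (simp only: M.nat_pow_Suc2[OF uc]) (simp add: M.m_assoc)
    have C1: "cg (?u \<otimes> ((?u [^] n) \<otimes> e)) (?u \<otimes> pw e (m ^ n))"
      by (rule cg_lmul[OF uc c1 _ Suc]) (use ec in simp)
    have E2: "?u \<otimes> pw e (m ^ n) = pw (?u \<otimes> e) (m ^ n)" by (rule lpow[OF uc ec])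
    have C2: "cg (pw (?u \<otimes> e) (m ^ n)) (pw (pw e m) (m ^ n))"
      by (rule cg_pow[OF _ _ ue]) (use uc ec in simp_all)
    have E3: "pw (pw e m) (m ^ n) = pw e (m ^ Suc n)" using ec by (simp add: G.nat_pow_pow)
    have C1': "cg (?u \<otimes> ((?u [^] n) \<otimes> e)) (pw (?u \<otimes> e) (m ^ n))" using C1 E2 by simp
    have "cg (?u \<otimes> ((?u [^] n) \<otimes> e)) (pw (pw e m) (m ^ n))"
      by (rule cg_trans[OF _ _ _ C1' C2]) (use uc ec c1 in simp_all)
    thus ?case using E1 E3 by simp
  qed
  have "cg e (pw e (m ^ p))" using iter[of p] upow_p[OF d] ec by simp
  moreover have "pw e (m ^ p) = pw e m"
  proof -
    have "pw e (m ^ p) = pw e (m ^ p mod p)" by (rule G.pow_mod_p[OF ec expo[OF ec]])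
    also have "\<dots> = pw e (m mod p)" using fermat_p[OF p] by simp
    also have "\<dots> = pw e m" by (rule G.pow_mod_p[OF ec expo[OF ec], symmetric])
    finally show ?thesis .
  qed
  ultimately have "cg e (pw e m)" by simp
  hence "cg (pw e m) e" by (rule cg_sym[OF ec G.nat_pow_closed[OF ec]])
  thus ?thesis by (rule cg_trans[OF M.m_closed[OF uc ec] G.nat_pow_closed[OF ec] ec ue])
qed

lemma claimA: assumes d: "d \<in> D" and y: "y \<in> carrier R" shows "cg ((\<one> \<oplus> d) \<otimes> y) y"
proof -
  let ?u = "\<one> \<oplus> d"
  have dc: "d \<in> carrier R" using Dc[OF d] .
  have uc: "?u \<in> carrier R" using dc by simp
  obtain e where e: "e \<in> L" "e \<notin> D" using exL by blast
  have ec: "e \<in> carrier R" using e by simp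
  obtain a w where aw: "w \<in> L" "y = pw \<one> a \<oplus> w" using decompH y by blast
  obtain m k where mk: "k \<in> D" "w = pw e m \<oplus> k" using decompL[OF e] aw(1) by blast
  have kc: "k \<in> carrier R" using Dc mk by auto
  have "?u \<otimes> y = ?u \<otimes> pw \<one> a \<oplus> (?u \<otimes> pw e m \<oplus> ?u \<otimes> k)"
    using aw mk uc ec kc by (simp add: ldist)
  also have "\<dots> = pw ?u a \<oplus> (pw (?u \<otimes> e) m \<oplus> k)" using uc ec A1[OF d mk(1)] by (simp add: lpow)
  finally have e1: "?u \<otimes> y = pw ?u a \<oplus> (pw (?u \<otimes> e) m \<oplus> k)" .
  have "cg ?u \<one>" using cg_Dr[OF _ d, of \<one>] by simp
  hence h1: "cg (pw ?u a) (pw \<one> a)" by (rule cg_pow[OF uc M.one_closed])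
  have h2: "cg (pw (?u \<otimes> e) m) (pw e m)" by (rule cg_pow[OF _ ec A2[OF d e]]) (use uc ec in simp)
  have h3: "cg (pw (?u \<otimes> e) m \<oplus> k) (pw e m \<oplus> k)"
    by (rule cg_add[OF _ _ kc kc h2 cg_refl[OF kc]]) (use uc ec in simp_all)
  have "cg (pw ?u a \<oplus> (pw (?u \<otimes> e) m \<oplus> k)) (pw \<one> a \<oplus> (pw e m \<oplus> k))"
    by (rule cg_add[OF _ _ _ _ h1 h3]) (use uc ec kc in simp_all)
  thus ?thesis using e1 aw mk by simp
qed

end

context LNR begin

lemma mul_decomp: assumes x: "x \<in> carrier R" and w: "w \<in> carrier R"
  shows "x \<otimes> (pw \<one> a \<oplus> w) = pw x a \<oplus> x \<otimes> w"
  using ldist[OF x _ w] lpow[OF x M.one_closed] x by simp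

lemma unit_case: assumes x: "x \<in> Units R" and y: "y \<in> carrier R" and z: "z \<in> D"
  shows "cg ((z \<oplus> x) \<otimes> y) (x \<otimes> y)"
proof -
  have xc: "x \<in> carrier R" using x by (rule M.Units_closed)
  have ixc: "inv x \<in> carrier R" using x by simp
  have zc: "z \<in> carrier R" using Dc[OF z] .
  let ?d = "inv x \<otimes> z"
  have dD: "?d \<in> D" by (rule lD[OF ixc z])
  have dc: "?d \<in> carrier R" using Dc[OF dD] .
  have "x \<otimes> (\<one> \<oplus> ?d) = x \<otimes> \<one> \<oplus> x \<otimes> ?d" using ldist[OF xc _ dc] by simp
  also have "x \<otimes> ?d = (x \<otimes> inv x) \<otimes> z" using xc ixc zc by (simp add: M.m_assoc)
  also have "\<dots> = z" using x zc by simp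
  also have "x \<otimes> \<one> \<oplus> z = z \<oplus> x" using xc Dcomm[OF z xc] by simp
  finally have e: "x \<otimes> (\<one> \<oplus> ?d) = z \<oplus> x" .
  have "(z \<oplus> x) \<otimes> y = x \<otimes> ((\<one> \<oplus> ?d) \<otimes> y)" using e[symmetric] xc dc y by (simp add: M.m_assoc)
  moreover have "cg (x \<otimes> ((\<one> \<oplus> ?d) \<otimes> y)) (x \<otimes> y)"
    by (rule cg_lmul[OF xc _ y claimA[OF dD y]]) (use dc y in simp)
  ultimately show ?thesis by simp
qed

lemma caseI:
  assumes y0: "y0 \<in> carrier R" and i0: "\<zero> \<otimes> y0 \<noteq> \<zero>"
    and x: "x \<in> L" and y: "y \<in> carrier R" and z: "z \<in> D"
  shows "cg ((z \<oplus> x) \<otimes> y) (x \<otimes> y)"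
proof -
  let ?i = "\<zero> \<otimes> y0"
  have iL: "?i \<in> L" by (rule L_rmul[OF zeroL y0])
  have ic: "?i \<in> carrier R" using y0 by simp
  have fixi: "x' \<otimes> ?i = ?i" if x': "x' \<in> carrier R" for x'
    using x' y0 lz[OF x'] by (simp add: M.m_assoc[symmetric])
  have "?i \<notin> D"
  proof
    assume "?i \<in> D"
    hence "\<zero> \<otimes> ?i = \<zero>" by (rule killL[OF zeroL])
    thus False using fixi[of \<zero>] i0 by simp
  qed
  hence dec: "\<forall>w\<in>L. \<exists>m<p. \<exists>d\<in>D. w = pw ?i m \<oplus> d" using decompL iL by blast
  obtain a w where aw: "w \<in> L" "y = pw \<one> a \<oplus> w" using decompH y by blast
  obtain m k where mk: "k \<in> D" "w = pw ?i m \<oplus> k" using dec aw(1) by blast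
  have kc: "k \<in> carrier R" using Dc mk by auto
  have wc: "w \<in> carrier R" using aw by simp
  have xw: "x' \<otimes> w = pw ?i m" if x': "x' \<in> L" for x'
  proof -
    have x'c: "x' \<in> carrier R" using x' by simp
    have "x' \<otimes> w = pw (x' \<otimes> ?i) m \<oplus> x' \<otimes> k" using mk ldist[OF x'c _ kc] lpow[OF x'c ic] ic by simp
    also have "\<dots> = pw ?i m" using fixi[OF x'c] killL[OF x' mk(1)] ic by simp
    finally show ?thesis .
  qed
  have xc: "x \<in> carrier R" using x by simp
  have zc: "z \<in> carrier R" using Dc[OF z] .
  have zxL: "z \<oplus> x \<in> L" using Ladd[OF D_L[OF z] x] .
  have zxc: "z \<oplus> x \<in> carrier R" using zc xc by simp
  have e1: "(z \<oplus> x) \<otimes> y = pw (z \<oplus> x) a \<oplus> pw ?i m" using aw mul_decomp[OF zxc wc] xw[OF zxL] by simp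
  have e2: "x \<otimes> y = pw x a \<oplus> pw ?i m" using aw mul_decomp[OF xc wc] xw[OF x] by simp
  have "cg (pw (z \<oplus> x) a) (pw x a)" by (rule cg_pow[OF zxc xc cg_Dl[OF xc z]])
  hence "cg (pw (z \<oplus> x) a \<oplus> pw ?i m) (pw x a \<oplus> pw ?i m)"
    using cg_add[OF G.nat_pow_closed[OF zxc] G.nat_pow_closed[OF xc] G.nat_pow_closed[OF ic]
      G.nat_pow_closed[OF ic] _ cg_refl[OF G.nat_pow_closed[OF ic]]] by blast
  thus ?thesis using e1 e2 by simp
qed

lemma caseII_1:
  assumes z0: "\<forall>y\<in>carrier R. \<zero> \<otimes> y = \<zero>" and c: "c \<in> D" and y: "y \<in> carrier R"
  shows "c \<otimes> y \<in> D"
proof (rule ccontr)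
  assume wD: "c \<otimes> y \<notin> D"
  have cc: "c \<in> carrier R" using Dc[OF c] .
  have cL: "c \<in> L" using D_L[OF c] .
  let ?w = "c \<otimes> y"
  have wL: "?w \<in> L" by (rule L_rmul[OF cL y])
  have wc: "?w \<in> carrier R" using cc y by simp
  have cc0: "c \<otimes> c = \<zero>" by (rule killL[OF cL c])
  have cw: "c \<otimes> ?w = \<zero>" using cc y cc0 z0 by (simp add: M.m_assoc[symmetric])
  have cl: "c \<otimes> l = \<zero>" if l: "l \<in> L" for l
  proof -
    obtain m k where mk: "k \<in> D" "l = pw ?w m \<oplus> k" using decompL[OF wL wD] l by blast
    have kc: "k \<in> carrier R" using Dc mk by auto
    have "c \<otimes> l = pw (c \<otimes> ?w) m \<oplus> c \<otimes> k" using mk ldist[OF cc _ kc] lpow[OF cc wc] wc by simp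
    also have "\<dots> = \<zero>" using cw killL[OF cL mk(1)] by simp
    finally show ?thesis .
  qed
  obtain a l where al: "l \<in> L" "y = pw \<one> a \<oplus> l" using decompH y by blast
  have "c \<otimes> y = pw c a" using al mul_decomp[OF cc, of l a] cl[OF al(1)] cc by simp
  hence "c \<otimes> y \<in> D" using Dpow[OF c] by simp
  thus False using wD by simp
qed

lemma caseII_2:
  assumes z0: "\<forall>y\<in>carrier R. \<zero> \<otimes> y = \<zero>" and x: "x \<in> L" and l: "l \<in> L"
  shows "x \<otimes> l \<in> D"
proof (rule ccontr)
  let ?w = "x \<otimes> l"
  assume wD: "?w \<notin> D"
  have xc: "x \<in> carrier R" and lc: "l \<in> carrier R" using x l by auto
  have wL: "?w \<in> L" by (rule L_rmul[OF x lc])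
  have wc: "?w \<in> carrier R" using xc lc by simp
  obtain m k where mk: "k \<in> D" "x = pw ?w m \<oplus> k" using decompL[OF wL wD] x by blast
  have kc: "k \<in> carrier R" using Dc mk by auto
  let ?y = "\<one> \<oplus> \<ominus> (pw l m)"
  have yc: "?y \<in> carrier R" using lc by simp
  have "x \<otimes> ?y = x \<oplus> \<ominus> (pw ?w m)" using ldist[OF xc _ G.inv_closed[OF G.nat_pow_closed[OF lc]]] xc lc
    by (simp add: linv lpow)
  also have "\<dots> = pw ?w m \<oplus> k \<oplus> \<ominus> (pw ?w m)" using mk by simp
  also have "\<dots> = k \<oplus> pw ?w m \<oplus> \<ominus> (pw ?w m)" using Dcomm[OF mk(1), of "pw ?w m"] wc by simp
  also have "\<dots> = k" using kc wc by (simp add: G.m_assoc)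
  finally have xy: "x \<otimes> ?y = k" .
  have "?y \<notin> L"
  proof
    assume "?y \<in> L"
    hence "?y \<oplus> pw l m \<in> L" using Ladd Lpow[OF l] by blast
    hence "\<one> \<in> L" using lc by (simp add: G.m_assoc)
    thus False by simp
  qed
  hence yU: "?y \<in> Units R" using yc by simp
  have "x = (x \<otimes> ?y) \<otimes> inv ?y" using xc yc yU by (simp add: M.m_assoc)
  hence "x = k \<otimes> inv ?y" using xy by simp
  hence xD: "x \<in> D" using caseII_1[OF z0 mk(1)] yU by simp
  have "?w \<in> D" by (rule caseII_1[OF z0 xD lc])
  thus False using wD by simp
qed

lemma caseII:
  assumes z0: "\<forall>y\<in>carrier R. \<zero> \<otimes> y = \<zero>"
    and x: "x \<in> L" and y: "y \<in> carrier R" and z: "z \<in> D"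
  shows "cg ((z \<oplus> x) \<otimes> y) (x \<otimes> y)"
proof -
  obtain a w where aw: "w \<in> L" "y = pw \<one> a \<oplus> w" using decompH y by blast
  have wc: "w \<in> carrier R" using aw by simp
  have xc: "x \<in> carrier R" using x by simp
  have zc: "z \<in> carrier R" using Dc[OF z] .
  have zxL: "z \<oplus> x \<in> L" using Ladd[OF D_L[OF z] x] .
  have zxc: "z \<oplus> x \<in> carrier R" using zc xc by simp
  have g: "cg (x' \<otimes> y) (pw x' a)" if x': "x' \<in> L" for x'
  proof -
    have x'c: "x' \<in> carrier R" using x' by simp
    have "x' \<otimes> y = pw x' a \<oplus> x' \<otimes> w" using aw mul_decomp[OF x'c wc] by simp
    moreover have "cg (pw x' a \<oplus> x' \<otimes> w) (pw x' a)"
      by (rule cg_Dr[OF _ caseII_2[OF z0 x' aw(1)]]) (use x'c in simp)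
    ultimately show ?thesis by simp
  qed
  have h1: "cg ((z \<oplus> x) \<otimes> y) (pw (z \<oplus> x) a)" by (rule g[OF zxL])
  have h2: "cg (pw (z \<oplus> x) a) (pw x a)" by (rule cg_pow[OF zxc xc cg_Dl[OF xc z]])
  have h3: "cg (pw x a) (x \<otimes> y)" by (rule cg_sym[OF _ _ g[OF x]]) (use xc y in simp_all)
  have h4: "cg ((z \<oplus> x) \<otimes> y) (pw x a)"
    by (rule cg_trans[OF M.m_closed[OF zxc y] G.nat_pow_closed[OF zxc] G.nat_pow_closed[OF xc] h1 h2])
  show ?thesis by (rule cg_trans[OF M.m_closed[OF zxc y] G.nat_pow_closed[OF xc] M.m_closed[OF xc y] h4 h3])
qed

lemma third: assumes x: "x \<in> carrier R" and y: "y \<in> carrier R" and z: "z \<in> D"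
  shows "cg ((z \<oplus> x) \<otimes> y) (x \<otimes> y)"
proof (cases "x \<in> Units R")
  case True thus ?thesis using unit_case y z by blast
next
  case False
  hence xL: "x \<in> L" using x by simp
  show ?thesis
  proof (cases "\<forall>y\<in>carrier R. \<zero> \<otimes> y = \<zero>")
    case True thus ?thesis using caseII xL y z by blast
  next
    case False
    then obtain y0 where "y0 \<in> carrier R" "\<zero> \<otimes> y0 \<noteq> \<zero>" by blast
    thus ?thesis using caseI xL y z by blast
  qed
qed

lemma ideal: "nr_ideal D R"
  unfolding nr_ideal_def
proof (intro conjI ballI)
  show "D \<lhd> add_monoid R" by (rule Dnormal)
  fix x z assume "x \<in> carrier R" "z \<in> D"
  thus "x \<otimes> z \<in> D" by (rule lD)
next
  fix x y z assume "x \<in> carrier R" "y \<in> carrier R" "z \<in> D"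
  thus "(z \<oplus> x) \<otimes> y \<oplus> \<ominus> (x \<otimes> y) \<in> D" by (rule third)
qed

end

theorem lemma7:
  fixes R :: "('a, 'm) ring_scheme" and p :: nat
  assumes "Factorial_Ring.prime p" and "odd p"
    and "local_nearring R"
    and "finite (carrier R)" and "card (carrier R) = p ^ 3"
    and "\<not> comm_group (add_monoid R)"
    and "\<forall>x\<in>carrier R. x [^]\<^bsub>add_monoid R\<^esub> p = \<zero>\<^bsub>R\<^esub>"
  shows "nr_ideal (derived (add_monoid R) (carrier R)) R"
proof -
  interpret LNR R p using assms by (unfold_locales) auto
  show ?thesis by (rule ideal)
qed

end
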